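(* For all integers $m\ge 2$, $n\ge 2$, the state complexity of $L(M)^*\cap L(N)$, where $M$ ranges over complete DFAs with $m$ states and $N$ over complete DFAs with $n$ states (over a common alphabet), is exactly $\frac{3}{4}2^m\cdot n-n+1$: for every such $M,N$ some DFA with at most $\frac{3}{4}2^m\cdot n-n+1$ states accepts $L(M)^*\cap L(N)$, and there exist such $M,N$ for which the minimal complete DFA of $L(M)^*\cap L(N)$ has exactly $\frac{3}{4}2^m\cdot n-n+1$ states.
   Context: DFAs are complete deterministic finite automata; $L(M)$ is the accepted language; $L^*$ is the Kleene star. The state complexity of a regular language is the number of states of its minimal complete DFA; the state complexity of an operation is the maximum state complexity of its result over all argument DFAs of the given sizes. *)

theory Defs
  imports Main
begin

type_synonym ('s,'a) dfa = "'s set \<times> ('s \<Rightarrow> 'a \<Rightarrow> 's) \<times> 's \<times> 's set"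

definition states :: "('s,'a) dfa \<Rightarrow> 's set" where "states M = fst M"
definition delta :: "('s,'a) dfa \<Rightarrow> 's \<Rightarrow> 'a \<Rightarrow> 's" where "delta M = fst (snd M)"
definition start :: "('s,'a) dfa \<Rightarrow> 's" where "start M = fst (snd (snd M))"
definition finals :: "('s,'a) dfa \<Rightarrow> 's set" where "finals M = snd (snd (snd M))"

definition complete_dfa :: "'a set \<Rightarrow> ('s,'a) dfa \<Rightarrow> bool" where
  "complete_dfa Sig M \<longleftrightarrow> finite Sig \<and> finite (states M) \<and> start M \<in> states M
     \<and> finals M \<subseteq> states M
     \<and> (\<forall>q\<in>states M. \<forall>a\<in>Sig. delta M q a \<in> states M)"

definition delta_star :: "('s,'a) dfa \<Rightarrow> 's \<Rightarrow> 'a list \<Rightarrow> 's" where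
  "delta_star M q w = foldl (delta M) q w"

definition lang :: "'a set \<Rightarrow> ('s,'a) dfa \<Rightarrow> 'a list set" where
  "lang Sig M = {w. set w \<subseteq> Sig \<and> delta_star M (start M) w \<in> finals M}"

definition kstar :: "'a list set \<Rightarrow> 'a list set" where
  "kstar L = {concat ws | ws. \<forall>w\<in>set ws. w \<in> L}"

text \<open>State complexity: number of states of a minimal complete DFA over Sig for L
  (states taken from nat, which is no loss of generality for finite automata).\<close>
definition sc :: "'a set \<Rightarrow> 'a list set \<Rightarrow> nat" where
  "sc Sig L = (LEAST k. \<exists>D :: (nat,'a) dfa. complete_dfa Sig D \<and> card (states D) = k
                        \<and> lang Sig D = L)"

end

theory Submission imports Defs begin

lemma kstar_nil[simp]: "[] \<in> kstar L"
  unfolding kstar_def by (auto intro: exI[of _ "[]"])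

lemma kstar_app: "u \<in> kstar L \<Longrightarrow> v \<in> L \<Longrightarrow> u @ v \<in> kstar L"
  unfolding kstar_def
proof clarify
  fix ws assume "\<forall>w\<in>set ws. w \<in> L" "v \<in> L"
  then show "\<exists>ws'. concat ws @ v = concat ws' \<and> (\<forall>w\<in>set ws'. w \<in> L)"
    by (intro exI[of _ "ws @ [v]"]) auto
qed

lemma kstar_snoc_aux:
  "\<forall>w\<in>set ws. w \<in> L \<Longrightarrow> concat ws = x @ [a] \<Longrightarrow>
   \<exists>u v. x = u @ v \<and> u \<in> kstar L \<and> v @ [a] \<in> L"
proof (induction ws arbitrary: x rule: rev_induct)
  case Nil then show ?case by simp
next
  case (snoc y ws)
  show ?case
  proof (cases "y = []")
    case True then show ?thesis using snoc by auto
  next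
    case False
    then obtain v where v: "y = v @ [a]" and x: "x = concat ws @ v"
      using snoc.prems(2) by (cases y rule: rev_cases) auto
    have "concat ws \<in> kstar L" unfolding kstar_def using snoc.prems(1) by auto
    then show ?thesis using v x snoc.prems(1) by auto
  qed
qed

lemma kstar_snoc: "x @ [a] \<in> kstar L \<longleftrightarrow> (\<exists>u v. x = u @ v \<and> u \<in> kstar L \<and> v @ [a] \<in> L)"
proof
  assume "x @ [a] \<in> kstar L"
  then obtain ws where "x @ [a] = concat ws" "\<forall>w\<in>set ws. w \<in> L" unfolding kstar_def by auto
  then show "\<exists>u v. x = u @ v \<and> u \<in> kstar L \<and> v @ [a] \<in> L" using kstar_snoc_aux by metis
next
  assume "\<exists>u v. x = u @ v \<and> u \<in> kstar L \<and> v @ [a] \<in> L"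
  then show "x @ [a] \<in> kstar L" using kstar_app by fastforce
qed

definition stepM :: "('s,'a) dfa \<Rightarrow> 's set \<Rightarrow> 'a \<Rightarrow> 's set" where
 "stepM M S a = (let T = (\<lambda>q. delta M q a) ` S in if T \<inter> finals M \<noteq> {} then insert (start M) T else T)"
definition getS :: "('s,'a) dfa \<Rightarrow> 's set option \<Rightarrow> 's set" where
 "getS M x = (case x of None \<Rightarrow> {start M} | Some S \<Rightarrow> S)"
definition dA :: "('s,'a) dfa \<Rightarrow> ('t,'a) dfa \<Rightarrow> ('s set option \<times> 't) \<Rightarrow> 'a \<Rightarrow> ('s set option \<times> 't)" where
 "dA M N s a = (Some (stepM M (getS M (fst s)) a), delta N (snd s) a)"
definition sA :: "('s,'a) dfa \<Rightarrow> ('t,'a) dfa \<Rightarrow> ('s set option \<times> 't)" where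
 "sA M N = (None, start N)"
definition accA :: "('s,'a) dfa \<Rightarrow> ('t,'a) dfa \<Rightarrow> ('s set option \<times> 't) \<Rightarrow> bool" where
 "accA M N s = (snd s \<in> finals N \<and> (fst s = None \<or> getS M (fst s) \<inter> finals M \<noteq> {}))"

lemma run_snd: "snd (foldl (dA M N) s w) = foldl (delta N) (snd s) w"
  by (induction w arbitrary: s) (auto simp: dA_def)

lemma run_fst: "getS M (fst (foldl (dA M N) s w)) = foldl (stepM M) (getS M (fst s)) w"
  by (induction w arbitrary: s) (auto simp: dA_def getS_def)

lemma run_fst_Some: "w \<noteq> [] \<Longrightarrow> fst (foldl (dA M N) s w) \<noteq> None"
proof (induction w arbitrary: s rule: rev_induct)
  case (snoc a w) then show ?case by (simp add: dA_def)
qed simp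

lemma Sx_char:
  assumes "set w \<subseteq> Sig"
  shows "foldl (stepM M) {start M} w =
     {delta_star M (start M) v | u v. w = u @ v \<and> u \<in> kstar (lang Sig M)}"
  using assms
proof (induction w rule: rev_induct)
  case Nil then show ?case by (auto simp: delta_star_def)
next
  case (snoc a w)
  define K where "K = kstar (lang Sig M)"
  define T where "T = {delta_star M (start M) (v @ [a]) | u v. w = u @ v \<and> u \<in> K}"
  have IH: "foldl (stepM M) {start M} w = {delta_star M (start M) v | u v. w = u @ v \<and> u \<in> K}"
    using snoc unfolding K_def by auto
  have T: "(\<lambda>q. delta M q a) ` {delta_star M (start M) v | u v. w = u @ v \<and> u \<in> K} = T"
    unfolding T_def by (auto simp: delta_star_def)
  have hit: "T \<inter> finals M \<noteq> {} \<longleftrightarrow> w @ [a] \<in> K"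
  proof
    assume "T \<inter> finals M \<noteq> {}"
    then obtain u v where uv: "w = u @ v" "u \<in> K" "delta_star M (start M) (v @ [a]) \<in> finals M"
      unfolding T_def by blast
    have "set (v @ [a]) \<subseteq> Sig" using snoc.prems uv(1) by auto
    then have "v @ [a] \<in> lang Sig M" using uv(3) unfolding lang_def by simp
    then show "w @ [a] \<in> K" unfolding K_def kstar_snoc using uv(1,2) unfolding K_def by blast
  next
    assume "w @ [a] \<in> K"
    then obtain u v where uv: "w = u @ v" "u \<in> K" "v @ [a] \<in> lang Sig M"
      unfolding K_def kstar_snoc by blast
    have "delta_star M (start M) (v @ [a]) \<in> T" unfolding T_def using uv(1,2) by blast
    moreover have "delta_star M (start M) (v @ [a]) \<in> finals M" using uv(3) unfolding lang_def by simp
    ultimately show "T \<inter> finals M \<noteq> {}" by blast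
  qed
  have R: "{delta_star M (start M) v | u v. w @ [a] = u @ v \<and> u \<in> K}
     = T \<union> (if w @ [a] \<in> K then {start M} else {})" (is "?L = ?R")
  proof
    show "?L \<subseteq> ?R"
    proof
      fix x assume "x \<in> ?L"
      then obtain u v where uv: "x = delta_star M (start M) v" "w @ [a] = u @ v" "u \<in> K" by blast
      show "x \<in> ?R"
      proof (cases v rule: rev_cases)
        case Nil then show ?thesis using uv by (auto simp: delta_star_def)
      next
        case (snoc v' b)
        then have "w = u @ v'" "b = a" using uv by auto
        then have "x \<in> T" unfolding T_def using uv snoc by blast
        then show ?thesis by simp
      qed
    qed
  next
    show "?R \<subseteq> ?L"
    proof
      fix x assume "x \<in> ?R"
      then consider "x \<in> T" | "w @ [a] \<in> K" "x = start M" by (auto split: if_splits)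
      then show "x \<in> ?L"
      proof cases
        case 1
        then obtain u v where "w = u @ v" "u \<in> K" "x = delta_star M (start M) (v @ [a])"
          unfolding T_def by blast
        then show ?thesis by (intro CollectI exI[of _ u] exI[of _ "v @ [a]"]) auto
      next
        case 2 then show ?thesis by (intro CollectI exI[of _ "w @ [a]"] exI[of _ "[]"]) (auto simp: delta_star_def)
      qed
    qed
  qed
  have "foldl (stepM M) {start M} (w @ [a]) = stepM M (foldl (stepM M) {start M} w) a" by simp
  also have "\<dots> = (if T \<inter> finals M \<noteq> {} then insert (start M) T else T)"
    unfolding IH stepM_def Let_def T ..
  also have "\<dots> = ?L" unfolding R hit by auto
  finally show ?case unfolding K_def .
qed

lemma star_acc:
  assumes "set w \<subseteq> Sig" "w \<noteq> []"
  shows "(foldl (stepM M) {start M} w \<inter> finals M \<noteq> {}) \<longleftrightarrow> w \<in> kstar (lang Sig M)"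
proof
  assume "foldl (stepM M) {start M} w \<inter> finals M \<noteq> {}"
  then obtain u v where uv: "w = u @ v" "u \<in> kstar (lang Sig M)" "delta_star M (start M) v \<in> finals M"
    unfolding Sx_char[OF assms(1)] by blast
  show "w \<in> kstar (lang Sig M)"
  proof (cases "v = []")
    case True then show ?thesis using uv by simp
  next
    case False
    have "v \<in> lang Sig M" using uv assms(1) unfolding lang_def by auto
    then show ?thesis using uv kstar_app by blast
  qed
next
  assume w: "w \<in> kstar (lang Sig M)"
  obtain x a where xa: "w = x @ [a]" using assms(2) by (cases w rule: rev_cases) auto
  then obtain u v where uv: "x = u @ v" "u \<in> kstar (lang Sig M)" "v @ [a] \<in> lang Sig M"
    using w kstar_snoc by metis
  have "delta_star M (start M) (v @ [a]) \<in> foldl (stepM M) {start M} w"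
    unfolding Sx_char[OF assms(1)] using xa uv by auto
  moreover have "delta_star M (start M) (v @ [a]) \<in> finals M" using uv(3) unfolding lang_def by auto
  ultimately show "foldl (stepM M) {start M} w \<inter> finals M \<noteq> {}" by blast
qed

lemma sem:
  assumes "set w \<subseteq> Sig"
  shows "accA M N (foldl (dA M N) (sA M N) w) \<longleftrightarrow> w \<in> kstar (lang Sig M) \<inter> lang Sig N"
proof (cases "w = []")
  case True then show ?thesis by (simp add: accA_def sA_def lang_def delta_star_def)
next
  case False
  have s: "snd (foldl (dA M N) (sA M N) w) = delta_star N (start N) w"
    by (simp add: run_snd sA_def delta_star_def)
  have f: "getS M (fst (foldl (dA M N) (sA M N) w)) = foldl (stepM M) {start M} w"
    using run_fst[of M N "sA M N" w] by (simp add: sA_def getS_def)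
  have n: "fst (foldl (dA M N) (sA M N) w) \<noteq> None" using run_fst_Some False by blast
  show ?thesis unfolding accA_def s f using n star_acc[OF assms False, of M] assms
    by (auto simp: lang_def)
qed

lemma rename:
  assumes "complete_dfa Sig A"
  shows "\<exists>D :: (nat,'a) dfa. complete_dfa Sig D \<and> card (states D) = card (states A) \<and> lang Sig D = lang Sig A"
proof -
  let ?Q = "states A"
  have fin: "finite ?Q" using assms unfolding complete_dfa_def by auto
  obtain h where h: "bij_betw h ?Q {0..<card ?Q}" using ex_bij_betw_finite_nat[OF fin] by blast
  have inj: "inj_on h ?Q" using h bij_betw_def by blast
  define D :: "(nat,'a) dfa" where
    "D = (h ` ?Q, \<lambda>q a. h (delta A (inv_into ?Q h q) a), h (start A), h ` finals A)"
  have sD: "states D = h ` ?Q" "start D = h (start A)" "finals D = h ` finals A"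
    "\<And>q a. delta D q a = h (delta A (inv_into ?Q h q) a)"
    unfolding D_def states_def start_def finals_def delta_def by auto
  have cl: "\<And>q a. q \<in> ?Q \<Longrightarrow> a \<in> Sig \<Longrightarrow> delta A q a \<in> ?Q"
    using assms unfolding complete_dfa_def by auto
  have run: "\<And>q. q \<in> ?Q \<Longrightarrow> set w \<subseteq> Sig \<Longrightarrow>
      delta_star D (h q) w = h (delta_star A q w) \<and> delta_star A q w \<in> ?Q" for w
  proof (induction w)
    case Nil then show ?case by (simp add: delta_star_def)
  next
    case (Cons a w)
    have "delta D (h q) a = h (delta A q a)" using sD(4) inv_into_f_f[OF inj Cons.prems(1)] by simp
    moreover have "delta A q a \<in> ?Q" using cl Cons.prems by auto
    ultimately show ?case using Cons.IH[of "delta A q a"] Cons.prems by (simp add: delta_star_def)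
  qed
  have st: "start A \<in> ?Q" and fs: "finals A \<subseteq> ?Q" using assms unfolding complete_dfa_def by auto
  have "complete_dfa Sig D"
    unfolding complete_dfa_def sD using assms fin st fs cl
    by (auto simp: complete_dfa_def inv_into_f_f[OF inj])
  moreover have "card (states D) = card ?Q" unfolding sD using card_image[OF inj] .
  moreover have "lang Sig D = lang Sig A"
  proof -
    { fix w assume w: "set w \<subseteq> Sig"
      have "delta_star D (start D) w \<in> finals D \<longleftrightarrow> delta_star A (start A) w \<in> finals A"
        unfolding sD using run[OF st w] inj fs inj_on_image_mem_iff by metis }
    then show ?thesis unfolding lang_def by auto
  qed
  ultimately show ?thesis by blast
qed

lemma cardG:
  assumes "finite Q" "q0 \<in> Q" "f \<in> Q" "q0 \<noteq> f"
  shows "card {S. S \<subseteq> Q \<and> S \<noteq> {} \<and> \<not>(f \<in> S \<and> q0 \<notin> S)} = 2 ^ card Q - 1 - 2 ^ (card Q - 2)"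
proof -
  define Bad where "Bad = insert f ` Pow (Q - {q0, f})"
  have inj: "inj_on (insert f) (Pow (Q - {q0, f}))"
    unfolding inj_on_def by (metis Diff_iff PowD insert_absorb insert_iff insert_ident subsetD)
  have cB: "card Bad = 2 ^ (card Q - 2)"
    unfolding Bad_def card_image[OF inj] using assms
    by (simp add: card_Pow card_Diff_subset)
  have eq: "{S. S \<subseteq> Q \<and> S \<noteq> {} \<and> \<not>(f \<in> S \<and> q0 \<notin> S)} = Pow Q - insert {} Bad"
  proof (intro set_eqI iffI)
    fix S assume "S \<in> {S. S \<subseteq> Q \<and> S \<noteq> {} \<and> \<not>(f \<in> S \<and> q0 \<notin> S)}"
    then show "S \<in> Pow Q - insert {} Bad" unfolding Bad_def using assms(4) by auto
  next
    fix S assume S: "S \<in> Pow Q - insert {} Bad"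
    have "\<not>(f \<in> S \<and> q0 \<notin> S)"
    proof
      assume "f \<in> S \<and> q0 \<notin> S"
      then have "S = insert f (S - {f})" "S - {f} \<in> Pow (Q - {q0, f})" using S by auto
      then have "S \<in> Bad" unfolding Bad_def by blast
      then show False using S by blast
    qed
    then show "S \<in> {S. S \<subseteq> Q \<and> S \<noteq> {} \<and> \<not>(f \<in> S \<and> q0 \<notin> S)}" using S by auto
  qed
  have sub: "insert {} Bad \<subseteq> Pow Q" unfolding Bad_def using assms(3) by auto
  have ne: "{} \<notin> Bad" unfolding Bad_def by auto
  have fB: "finite Bad" unfolding Bad_def using assms by simp
  have "card (Pow Q - insert {} Bad) = card (Pow Q) - card (insert {} Bad)"
    using sub assms(1) by (simp add: card_Diff_subset finite_subset)
  also have "\<dots> = 2 ^ card Q - 1 - 2 ^ (card Q - 2)"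
    using ne fB cB assms(1) by (simp add: card_Pow)
  finally show ?thesis unfolding eq .
qed

lemma arith1:
  fixes m n g :: nat
  assumes "m \<ge> 2" "g \<le> 2 ^ m - 1 - 2 ^ (m - 2)"
  shows "Suc (g * n) \<le> 3 * 2 ^ (m - 2) * n - n + 1"
proof -
  obtain k where k: "m = k + 2" using assms(1) by (metis add.commute le_Suc_ex)
  have "2 ^ m - 1 - 2 ^ (m - 2) = 3 * 2 ^ k - (1::nat)" unfolding k by simp
  then have "g * n \<le> (3 * 2 ^ k - 1) * n" using assms(2) by simp
  also have "\<dots> = 3 * 2 ^ k * n - n" by (simp add: diff_mult_distrib)
  finally show ?thesis unfolding k by simp
qed

lemma arith2:
  fixes m :: nat
  assumes "m \<ge> 2"
  shows "m \<le> 2 ^ m - 1 - 2 ^ (m - 2)"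
proof -
  obtain k where k: "m = k + 2" using assms(1) by (metis add.commute le_Suc_ex)
  have "k + 3 \<le> 3 * 2 ^ k" by (induction k) auto
  then show ?thesis unfolding k by simp
qed

definition invS :: "('s,'a) dfa \<Rightarrow> ('t,'a) dfa \<Rightarrow> ('s set option \<times> 't) \<Rightarrow> bool" where
  "invS M N s \<longleftrightarrow> snd s \<in> states N \<and> (fst s = None \<longrightarrow> snd s = start N) \<and>
     (\<forall>S. fst s = Some S \<longrightarrow> S \<subseteq> states M \<and> S \<noteq> {} \<and> (S \<inter> finals M \<noteq> {} \<longrightarrow> start M \<in> S)
        \<and> (finals M \<subseteq> {start M} \<longrightarrow> (\<exists>q. S = {q})))"

lemma inv_step:
  assumes cM: "complete_dfa Sig M" and cN: "complete_dfa Sig N" and a: "a \<in> Sig" and i: "invS M N s"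
  shows "invS M N (dA M N s a)"
proof -
  define S where "S = getS M (fst s)"
  have S: "S \<subseteq> states M" "S \<noteq> {}" "finals M \<subseteq> {start M} \<longrightarrow> (\<exists>q. S = {q})"
    using i cM unfolding S_def getS_def invS_def complete_dfa_def by (auto split: option.splits)
  define T where "T = (\<lambda>q. delta M q a) ` S"
  have T: "T \<subseteq> states M" "T \<noteq> {}" using S cM a unfolding T_def complete_dfa_def by auto
  have st: "stepM M S a = (if T \<inter> finals M \<noteq> {} then insert (start M) T else T)"
    unfolding stepM_def T_def Let_def ..
  have q0: "start M \<in> states M" using cM unfolding complete_dfa_def by auto
  have A: "stepM M S a \<subseteq> states M" "stepM M S a \<noteq> {}"
    "stepM M S a \<inter> finals M \<noteq> {} \<longrightarrow> start M \<in> stepM M S a"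
    using T q0 unfolding st by auto
  have B: "finals M \<subseteq> {start M} \<longrightarrow> (\<exists>q. stepM M S a = {q})"
  proof
    assume F: "finals M \<subseteq> {start M}"
    then obtain q where "S = {q}" using S by auto
    then have "T = {delta M q a}" unfolding T_def by simp
    then show "\<exists>q. stepM M S a = {q}" unfolding st using F by auto
  qed
  have "snd (dA M N s a) \<in> states N" using i cN a unfolding dA_def invS_def complete_dfa_def by auto
  then show ?thesis using A B unfolding invS_def dA_def S_def by auto
qed

lemma inv_run:
  assumes cM: "complete_dfa Sig M" and cN: "complete_dfa Sig N" and "set w \<subseteq> Sig"
  shows "invS M N (foldl (dA M N) (sA M N) w)"
  using assms(3)
proof (induction w rule: rev_induct)
  case Nil then show ?case using cN unfolding invS_def sA_def complete_dfa_def by auto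
next
  case (snoc a w) then show ?case using inv_step[OF cM cN] by auto
qed

lemma part1:
  fixes m n :: nat and M :: "('s,'a) dfa" and N :: "('t,'a) dfa"
  assumes "m \<ge> 2" and cM: "complete_dfa Sig M" and "card (states M) = m"
    and cN: "complete_dfa Sig N" and "card (states N) = n"
  shows "\<exists>D :: (nat,'a) dfa. complete_dfa Sig D \<and>
                card (states D) \<le> 3 * 2 ^ (m - 2) * n - n + 1 \<and>
                lang Sig D = kstar (lang Sig M) \<inter> lang Sig N"
proof -
  define R where "R = {foldl (dA M N) (sA M N) w | w. set w \<subseteq> Sig}"
  define A where "A = (R, dA M N, sA M N, {s \<in> R. accA M N s})"
  have sA: "states A = R" "delta A = dA M N" "start A = sA M N" "finals A = {s \<in> R. accA M N s}"
    unfolding A_def states_def delta_def start_def finals_def by auto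
  have fQ: "finite (states M)" and fN: "finite (states N)" and q0: "start M \<in> states M"
    and fF: "finals M \<subseteq> states M"
    using cM cN unfolding complete_dfa_def by auto
  have Rinv: "\<And>s. s \<in> R \<Longrightarrow> invS M N s" unfolding R_def using inv_run[OF cM cN] by auto
  have bound: "finite R \<and> card R \<le> 3 * 2 ^ (m - 2) * n - n + 1"
  proof (cases "finals M \<subseteq> {start M}")
    case True
    define X where "X = insert (None, start N) ((\<lambda>(q,p). (Some {q}, p)) ` (states M \<times> states N))"
    have "R \<subseteq> X"
    proof
      fix s assume "s \<in> R"
      then have i: "invS M N s" using Rinv by auto
      obtain x p where s: "s = (x,p)" by (cases s)
      show "s \<in> X"
      proof (cases x)
        case None then show ?thesis using i s unfolding X_def invS_def by auto
      next
        case (Some S)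
        then obtain q where "S = {q}" "q \<in> states M" "p \<in> states N" using i s True unfolding invS_def by auto
        then show ?thesis unfolding X_def s Some by force
      qed
    qed
    moreover have "finite X" unfolding X_def using fQ fN by simp
    moreover have "card X \<le> Suc (m * n)"
    proof -
      have "card X \<le> Suc (card ((\<lambda>(q,p). (Some {q}, p)) ` (states M \<times> states N)))"
        unfolding X_def by (simp add: card_insert_le_m1)
      also have "\<dots> \<le> Suc (card (states M \<times> states N))"
        using card_image_le[OF finite_cartesian_product[OF fQ fN]] by simp
      finally show ?thesis using assms by (simp add: card_cartesian_product)
    qed
    moreover have "Suc (m * n) \<le> 3 * 2 ^ (m - 2) * n - n + 1"
      using arith1[OF assms(1) arith2[OF assms(1)]] .
    ultimately show ?thesis by (meson card_mono finite_subset le_trans)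
  next
    case False
    then obtain f where f: "f \<in> finals M" "f \<noteq> start M" by auto
    define G where "G = {S. S \<subseteq> states M \<and> S \<noteq> {} \<and> \<not>(f \<in> S \<and> start M \<notin> S)}"
    define X where "X = insert (None, start N) (Some ` G \<times> states N)"
    have "R \<subseteq> X"
    proof
      fix s assume "s \<in> R"
      then have i: "invS M N s" using Rinv by auto
      obtain x p where s: "s = (x,p)" by (cases s)
      show "s \<in> X"
      proof (cases x)
        case None then show ?thesis using i s unfolding X_def invS_def by auto
      next
        case (Some S)
        then have "S \<in> G" "p \<in> states N" using i s f unfolding invS_def G_def by auto
        then show ?thesis unfolding X_def s Some by auto
      qed
    qed
    moreover have fG: "finite G" unfolding G_def using fQ by simp
    moreover have "finite X" unfolding X_def using fG fN by simp
    moreover have "card X \<le> Suc (card G * n)"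
    proof -
      have "card X \<le> Suc (card (Some ` G \<times> states N))"
        unfolding X_def by (simp add: card_insert_le_m1)
      also have "\<dots> = Suc (card G * n)" using assms fG fN
        by (simp add: card_cartesian_product card_image)
      finally show ?thesis .
    qed
    moreover have "card G = 2 ^ m - 1 - 2 ^ (m - 2)"
      unfolding G_def using cardG[OF fQ q0 _ f(2)[symmetric]] f fF assms(3) by auto
    then have "Suc (card G * n) \<le> 3 * 2 ^ (m - 2) * n - n + 1"
      using arith1[OF assms(1)] by simp
    ultimately show ?thesis by (meson card_mono finite_subset le_trans)
  qed
  have cA: "complete_dfa Sig A"
    unfolding complete_dfa_def sA
  proof (intro conjI ballI)
    show "finite Sig" using cM unfolding complete_dfa_def by auto
    show "finite R" using bound by auto
    show "sA M N \<in> R" unfolding R_def by (auto intro: exI[of _ "[]"])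
    show "{s \<in> R. accA M N s} \<subseteq> R" by auto
    fix q a assume "q \<in> R" "a \<in> Sig"
    then obtain w where "q = foldl (dA M N) (sA M N) w" "set w \<subseteq> Sig" unfolding R_def by auto
    then show "dA M N q a \<in> R" unfolding R_def using \<open>a \<in> Sig\<close>
      by (intro CollectI exI[of _ "w @ [a]"]) auto
  qed
  have lA: "lang Sig A = kstar (lang Sig M) \<inter> lang Sig N"
  proof -
    { fix w assume w: "set w \<subseteq> Sig"
      have "foldl (dA M N) (sA M N) w \<in> R" unfolding R_def using w by auto
      then have "delta_star A (start A) w \<in> finals A \<longleftrightarrow> w \<in> kstar (lang Sig M) \<inter> lang Sig N"
        unfolding sA delta_star_def using sem[OF w, of M N] by auto }
    moreover have "kstar (lang Sig M) \<inter> lang Sig N \<subseteq> {w. set w \<subseteq> Sig}" unfolding lang_def by auto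
    ultimately show ?thesis unfolding lang_def[of Sig A] by auto
  qed
  obtain D :: "(nat,'a) dfa" where "complete_dfa Sig D" "card (states D) = card (states A)" "lang Sig D = lang Sig A"
    using rename[OF cA] by blast
  then show ?thesis using bound lA sA(1) by (intro exI[of _ D]) auto
qed

lemma arith1_eq:
  fixes m n :: nat
  assumes "m \<ge> 2"
  shows "Suc ((2 ^ m - 1 - 2 ^ (m - 2)) * n) = 3 * 2 ^ (m - 2) * n - n + 1"
proof -
  obtain k where k: "m = k + 2" using assms(1) by (metis add.commute le_Suc_ex)
  have "2 ^ m - 1 - 2 ^ (m - 2) = 3 * 2 ^ k - (1::nat)" unfolding k by simp
  moreover have "(3 * 2 ^ k - 1) * n = 3 * 2 ^ k * n - n" by (simp add: diff_mult_distrib)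
  ultimately show ?thesis unfolding k by simp
qed

lemma dstar_in:
  assumes "complete_dfa Sig D" "q \<in> states D" "set w \<subseteq> Sig"
  shows "delta_star D q w \<in> states D"
  using assms(2,3)
proof (induction w arbitrary: q)
  case Nil then show ?case by (simp add: delta_star_def)
next
  case (Cons a w)
  have "delta D q a \<in> states D" using assms(1) Cons.prems unfolding complete_dfa_def by auto
  then show ?case using Cons by (simp add: delta_star_def)
qed

lemma lower:
  assumes cD: "complete_dfa Sig D" and lD: "lang Sig D = kstar (lang Sig M) \<inter> lang Sig N"
    and reach: "\<forall>t\<in>T. \<exists>w. set w \<subseteq> Sig \<and> foldl (dA M N) (sA M N) w = t"
    and dist: "\<forall>t\<in>T. \<forall>t'\<in>T. t \<noteq> t' \<longrightarrow>
         (\<exists>z. set z \<subseteq> Sig \<and> accA M N (foldl (dA M N) t z) \<noteq> accA M N (foldl (dA M N) t' z))"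
  shows "card T \<le> card (states D)"
proof -
  define W where "W t = (SOME w. set w \<subseteq> Sig \<and> foldl (dA M N) (sA M N) w = t)" for t
  have W: "set (W t) \<subseteq> Sig \<and> foldl (dA M N) (sA M N) (W t) = t" if "t \<in> T" for t
    unfolding W_def by (rule someI_ex) (use reach that in blast)
  define g where "g t = delta_star D (start D) (W t)" for t
  have st: "start D \<in> states D" "finite (states D)" using cD unfolding complete_dfa_def by auto
  have L: "delta_star D (start D) (W t @ z) \<in> finals D \<longleftrightarrow> accA M N (foldl (dA M N) t z)"
    if "t \<in> T" "set z \<subseteq> Sig" for t z
  proof -
    have s: "set (W t @ z) \<subseteq> Sig" using W[OF that(1)] that(2) by auto
    have "delta_star D (start D) (W t @ z) \<in> finals D \<longleftrightarrow> W t @ z \<in> lang Sig D"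
      using s unfolding lang_def by auto
    also have "\<dots> \<longleftrightarrow> accA M N (foldl (dA M N) (sA M N) (W t @ z))" using sem[OF s, of M N] lD by auto
    also have "\<dots> \<longleftrightarrow> accA M N (foldl (dA M N) t z)" using W[OF that(1)] by simp
    finally show ?thesis .
  qed
  have "inj_on g T"
  proof (rule inj_onI, rule ccontr)
    fix t t' assume tt: "t \<in> T" "t' \<in> T" "g t = g t'" "t \<noteq> t'"
    then obtain z where z: "set z \<subseteq> Sig" "accA M N (foldl (dA M N) t z) \<noteq> accA M N (foldl (dA M N) t' z)"
      using dist by blast
    have "delta_star D (start D) (W t @ z) = delta_star D (start D) (W t' @ z)"
      using tt(3) unfolding g_def delta_star_def by simp
    then show False using L[OF tt(1) z(1)] L[OF tt(2) z(1)] z(2) by metis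
  qed
  moreover have "g ` T \<subseteq> states D" unfolding g_def using dstar_in[OF cD st(1)] W by auto
  ultimately show ?thesis by (rule card_inj_on_le[OF _ _ st(2)])
qed

definition "lh = (1::nat)"
definition "lsw q = 8*q+(2::nat)"
definition "lz q = 8*q+(3::nat)"
definition "lc q = 8*q+(4::nat)"
definition "ld q = 8*q+(5::nat)"
definition "lt q = 8*q+(6::nat)"

definition fM :: "nat \<Rightarrow> nat \<Rightarrow> nat \<Rightarrow> nat" where
 "fM m k x = (let c = k mod 8; q = k div 8 in
   if c = 1 then (if x = 0 then m - 1 else x)
   else if c = 2 then (if q < m then (if x = m - 1 then q else if x = q then m - 1 else x) else x)
   else if c = 3 then (if x = 0 \<and> q < m then q else x)
   else if c = 5 then m - 1
   else if c = 6 then (if x = q then m - 1 else 0)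
   else x)"

definition fN :: "nat \<Rightarrow> nat \<Rightarrow> nat \<Rightarrow> nat" where
 "fN n k p = (let c = k mod 8; q = k div 8 in
   if c = 4 then (if q < n then q else p)
   else if c = 5 then (if p = q then 0 else 1)
   else if c = 6 then 0 else p)"

definition MW :: "nat \<Rightarrow> (nat,nat) dfa" where "MW m = ({..<m}, \<lambda>x k. fM m k x, 0, {m - 1})"
definition NW :: "nat \<Rightarrow> (nat,nat) dfa" where "NW n = ({..<n}, \<lambda>p k. fN n k p, 0, {0})"

lemma MW_simps: "states (MW m) = {..<m}" "delta (MW m) = (\<lambda>x k. fM m k x)" "start (MW m) = 0"
  "finals (MW m) = {m - 1}"
  unfolding MW_def states_def delta_def start_def finals_def by auto
lemma NW_simps: "states (NW n) = {..<n}" "delta (NW n) = (\<lambda>p k. fN n k p)" "start (NW n) = 0"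
  "finals (NW n) = {0}"
  unfolding NW_def states_def delta_def start_def finals_def by auto

lemma md8: "(8*q + c) mod 8 = c mod 8" "(8*q + c) div 8 = q + c div 8" for q c :: nat
  by simp_all

lemma fM_lt: "m \<ge> 2 \<Longrightarrow> x < m \<Longrightarrow> fM m k x < m"
  unfolding fM_def Let_def by auto
lemma fN_lt: "n \<ge> 2 \<Longrightarrow> p < n \<Longrightarrow> fN n k p < n"
  unfolding fN_def Let_def by auto

lemma let_lt[simp]: "q < m \<Longrightarrow> lsw q < 8*(m+n)" "q < m \<Longrightarrow> lz q < 8*(m+n)"
  "q < n \<Longrightarrow> lc q < 8*(m+n)" "q < n \<Longrightarrow> ld q < 8*(m+n)" "q < m \<Longrightarrow> lt q < 8*(m+n)"
  "m \<ge> 2 \<Longrightarrow> lh < 8*(m+n)"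
  unfolding lh_def lsw_def lz_def lc_def ld_def lt_def by auto

lemma fM_id: "fM m 0 x = x" by (simp only: fM_def Let_def md8 lh_def lsw_def lz_def lc_def ld_def lt_def, simp)
lemma fM_h: "fM m lh x = (if x = 0 then m - 1 else x)" by (simp only: fM_def Let_def md8 lh_def lsw_def lz_def lc_def ld_def lt_def, simp)
lemma fM_sw: "q < m \<Longrightarrow> fM m ((lsw q)) x = (if x = m - 1 then q else if x = q then m - 1 else x)" by (simp only: fM_def Let_def md8 lh_def lsw_def lz_def lc_def ld_def lt_def, simp)
lemma fM_z: "s < m \<Longrightarrow> fM m ((lz s)) x = (if x = 0 then s else x)" by (simp only: fM_def Let_def md8 lh_def lsw_def lz_def lc_def ld_def lt_def, simp)
lemma fM_c: "fM m ((lc p)) x = x" by (simp only: fM_def Let_def md8 lh_def lsw_def lz_def lc_def ld_def lt_def, simp)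
lemma fM_d: "fM m ((ld p)) x = m - 1" by (simp only: fM_def Let_def md8 lh_def lsw_def lz_def lc_def ld_def lt_def, simp)
lemma fM_t: "fM m ((lt q)) x = (if x = q then m - 1 else 0)" by (simp only: fM_def Let_def md8 lh_def lsw_def lz_def lc_def ld_def lt_def, simp)
lemma fN_id: "fN n 0 p = p" by (simp only: fN_def Let_def md8 lh_def lsw_def lz_def lc_def ld_def lt_def, simp)
lemma fN_h: "fN n lh p = p" by (simp only: fN_def Let_def md8 lh_def lsw_def lz_def lc_def ld_def lt_def, simp)
lemma fN_sw: "fN n ((lsw q)) p = p" by (simp only: fN_def Let_def md8 lh_def lsw_def lz_def lc_def ld_def lt_def, simp)
lemma fN_z: "fN n ((lz s)) p = p" by (simp only: fN_def Let_def md8 lh_def lsw_def lz_def lc_def ld_def lt_def, simp)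
lemma fN_c: "q < n \<Longrightarrow> fN n ((lc q)) p = q" by (simp only: fN_def Let_def md8 lh_def lsw_def lz_def lc_def ld_def lt_def, simp)
lemma fN_d: "fN n ((ld q)) p = (if p = q then 0 else 1)" by (simp only: fN_def Let_def md8 lh_def lsw_def lz_def lc_def ld_def lt_def, simp)
lemma fN_t: "fN n ((lt q)) p = 0" by (simp only: fN_def Let_def md8 lh_def lsw_def lz_def lc_def ld_def lt_def, simp)

lemma MW_complete: "m \<ge> 2 \<Longrightarrow> complete_dfa {..<8*(m+n)} (MW m)"
  unfolding complete_dfa_def MW_simps using fM_lt by auto
lemma NW_complete: "n \<ge> 2 \<Longrightarrow> complete_dfa {..<8*(m+n)} (NW n)"
  unfolding complete_dfa_def NW_simps using fN_lt by auto

lemma stepMW: "stepM (MW m) S a = (let T = (\<lambda>x. fM m a x) ` S in if m - 1 \<in> T then insert 0 T else T)"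
  unfolding stepM_def MW_simps Let_def by auto

lemma dAW: "dA (MW m) (NW n) (x, p) a = (Some (stepM (MW m) (getS (MW m) x) a), fN n a p)"
  unfolding dA_def NW_simps by simp

lemma accW: "accA (MW m) (NW n) (Some S, p) = (p = 0 \<and> m - 1 \<in> S)"
  "accA (MW m) (NW n) (None, p) = (p = 0)"
  unfolding accA_def NW_simps MW_simps getS_def by auto

lemma R1: "m \<ge> 2 \<Longrightarrow> dA (MW m) (NW n) (None, 0) 0 = (Some {0}, 0)"
  unfolding dAW stepMW getS_def MW_simps by (simp add: fM_id fN_id)

lemma R2:
  assumes "m \<ge> 2" "0 \<in> S" "m - 1 \<notin> S" "0 < q" "q < m - 1" "q \<notin> S"
  shows "foldl (dA (MW m) (NW n)) (Some S, p) [lh, (lsw q)] = (Some (insert q S), p)"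
proof -
  have i1: "(\<lambda>x. fM m lh x) ` S = insert (m - 1) (S - {0})"
    unfolding fM_h using assms(2) by (auto simp: image_iff)
  have s1: "stepM (MW m) S lh = insert (m - 1) S"
    unfolding stepMW Let_def i1 using assms(2) by auto
  have i2: "(\<lambda>x. fM m ((lsw q)) x) ` insert (m - 1) S = insert q S"
  proof -
    have "(\<lambda>x. fM m ((lsw q)) x) ` insert (m - 1) S = insert q ((\<lambda>x. fM m ((lsw q)) x) ` S)"
      using assms by (simp add: fM_sw)
    also have "(\<lambda>x. fM m ((lsw q)) x) ` S = S"
    proof -
      have "\<And>x. x \<in> S \<Longrightarrow> fM m ((lsw q)) x = x" using assms by (auto simp: fM_sw)
      then show ?thesis by (simp add: image_cong)
    qed
    finally show ?thesis .
  qed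
  have s2: "stepM (MW m) (insert (m - 1) S) ((lsw q)) = insert q S"
    unfolding stepMW Let_def i2 using assms by auto
  show ?thesis using s1 s2 by (simp add: dAW getS_def fN_h fN_sw)
qed

lemma R3:
  assumes "m \<ge> 2" "0 \<in> S" "m - 1 \<notin> S"
  shows "dA (MW m) (NW n) (Some S, p) lh = (Some (insert (m - 1) S), p)"
proof -
  have i1: "(\<lambda>x. fM m lh x) ` S = insert (m - 1) (S - {0})"
    unfolding fM_h using assms(2) by (auto simp: image_iff)
  have s1: "stepM (MW m) S lh = insert (m - 1) S"
    unfolding stepMW Let_def i1 using assms(2) by auto
  show ?thesis using s1 by (simp add: dAW getS_def fN_h)
qed

lemma R4:
  assumes "m \<ge> 2" "0 \<in> S" "m - 1 \<notin> S" "s \<in> S" "0 < s" "s < m"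
  shows "dA (MW m) (NW n) (Some S, p) ((lz s)) = (Some (S - {0}), p)"
proof -
  have i: "(\<lambda>x. fM m ((lz s)) x) ` S = S - {0}"
    unfolding fM_z[OF assms(6)] using assms(2,4,5) by (auto simp: image_iff)
  have "stepM (MW m) S ((lz s)) = S - {0}"
    unfolding stepMW Let_def i using assms(3) by auto
  then show ?thesis by (simp add: dAW getS_def fN_z)
qed

lemma R5:
  assumes "m - 1 \<in> S \<longrightarrow> 0 \<in> S" "p' < n"
  shows "dA (MW m) (NW n) (Some S, p) ((lc p')) = (Some S, p')"
proof -
  have "stepM (MW m) S ((lc p')) = S" unfolding stepMW Let_def fM_c using assms(1) by auto
  then show ?thesis by (simp add: dAW getS_def fN_c[OF assms(2)])
qed

lemma build:
  assumes "m \<ge> 2" "finite T"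
  shows "T \<subseteq> {0<..<m - 1} \<Longrightarrow> \<exists>w. set w \<subseteq> {..<8*(m+n)} \<and>
     foldl (dA (MW m) (NW n)) (Some {0}, 0) w = (Some (insert 0 T), 0)"
  using assms(2)
proof (induction T rule: finite_induct)
  case empty then show ?case by (intro exI[of _ "[]"]) auto
next
  case (insert q T)
  then obtain w where w: "set w \<subseteq> {..<8*(m+n)}"
    "foldl (dA (MW m) (NW n)) (Some {0}, 0) w = (Some (insert 0 T), 0)" by auto
  have q: "0 < q" "q < m - 1" using insert.prems by auto
  have "foldl (dA (MW m) (NW n)) (Some (insert 0 T), 0) [lh, (lsw q)] = (Some (insert q (insert 0 T)), 0)"
  proof (rule R2[OF assms(1)])
    show "0 \<in> insert 0 T" by simp
    show "m - 1 \<notin> insert 0 T" using insert.prems assms(1) by auto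
    show "0 < q" "q < m - 1" by fact+
    show "q \<notin> insert 0 T" using q insert.hyps(2) by auto
  qed
  moreover have "set (w @ [lh, (lsw q)]) \<subseteq> {..<8*(m+n)}" using w q by (auto simp: lh_def lsw_def)
  ultimately show ?case using w
    by (intro exI[of _ "w @ [lh, (lsw q)]"]) (simp add: insert_commute)
qed

definition GW :: "nat \<Rightarrow> nat set set" where
  "GW m = {S. S \<subseteq> {..<m} \<and> S \<noteq> {} \<and> \<not>(m - 1 \<in> S \<and> 0 \<notin> S)}"

lemma reach_all:
  assumes "m \<ge> 2" "S \<in> GW m" "p < n"
  shows "\<exists>w. set w \<subseteq> {..<8*(m+n)} \<and> foldl (dA (MW m) (NW n)) (sA (MW m) (NW n)) w = (Some S, p)"
proof -
  define T where "T = S - {0, m - 1}"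
  have S: "S \<subseteq> {..<m}" "S \<noteq> {}" "m - 1 \<in> S \<longrightarrow> 0 \<in> S" using assms(2) unfolding GW_def by auto
  have T: "finite T" "T \<subseteq> {0<..<m - 1}" unfolding T_def using S(1) by (auto intro: finite_subset)
  obtain w where w: "set w \<subseteq> {..<8*(m+n)}"
    "foldl (dA (MW m) (NW n)) (Some {0}, 0) w = (Some (insert 0 T), 0)"
    using build[OF assms(1) T(1) T(2)] by blast
  have s0: "foldl (dA (MW m) (NW n)) (sA (MW m) (NW n)) (0 # w) = (Some (insert 0 T), 0)"
    using w R1[OF assms(1)] by (simp add: sA_def NW_simps)
  have 0: "0 \<in> insert 0 T" and f: "m - 1 \<notin> insert 0 T" using assms(1) unfolding T_def by auto
  have cp: "(lc p) < 8*(m+n)" "(0::nat) < 8*(m+n)" "lh < 8*(m+n)" using assms by (auto simp: lh_def lc_def)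
  consider (a) "0 \<in> S" "m - 1 \<notin> S" | (b) "0 \<in> S" "m - 1 \<in> S" | (c) "0 \<notin> S" using S by blast
  then show ?thesis
  proof cases
    case a
    then have "S = insert 0 T" unfolding T_def by auto
    then show ?thesis using s0 w cp R5[OF S(3) assms(3)] 
      by (intro exI[of _ "0 # w @ [(lc p)]"]) auto
  next
    case b
    then have SS: "S = insert (m - 1) (insert 0 T)" unfolding T_def by auto
    have "foldl (dA (MW m) (NW n)) (sA (MW m) (NW n)) (0 # w @ [lh, (lc p)]) = (Some S, p)"
      using s0 R3[OF assms(1) 0 f] R5[OF S(3) assms(3)] SS by simp
    then show ?thesis using w cp by (intro exI[of _ "0 # w @ [lh, (lc p)]"]) auto
  next
    case c
    then have f': "m - 1 \<notin> S" using S(3) by blast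
    then have ST: "S = T" unfolding T_def using c by auto
    obtain s where s: "s \<in> S" using S(2) by auto
    then have s': "0 < s" "s < m" "s \<in> insert 0 T" using c S(1) ST by (auto intro!: gr0I)
    have e: "insert 0 T - {0} = S" using ST c by auto
    have "foldl (dA (MW m) (NW n)) (sA (MW m) (NW n)) (0 # w @ [(lz s), (lc p)]) = (Some S, p)"
      using s0 R4[OF assms(1) 0 f s'(3) s'(1) s'(2)] e R5[OF S(3) assms(3)] by simp
    moreover have "(lz s) < 8*(m+n)" using s' by (simp add: lz_def)
    ultimately show ?thesis using w cp by (intro exI[of _ "0 # w @ [(lz s), (lc p)]"]) auto
  qed
qed

lemma acc_t:
  assumes "m \<ge> 2"
  shows "accA (MW m) (NW n) (dA (MW m) (NW n) (x, p) ((lt q))) \<longleftrightarrow> q \<in> getS (MW m) x"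
proof -
  have "m - 1 \<in> stepM (MW m) (getS (MW m) x) ((lt q)) \<longleftrightarrow> q \<in> getS (MW m) x"
    unfolding stepMW Let_def fM_t using assms by (auto simp: image_iff)
  then show ?thesis unfolding dAW accW fN_t by simp
qed

lemma acc_d:
  assumes "m \<ge> 2" "S \<noteq> {}"
  shows "accA (MW m) (NW n) (dA (MW m) (NW n) (Some S, p) ((ld p'))) \<longleftrightarrow> p = p'"
proof -
  have "m - 1 \<in> stepM (MW m) S ((ld p'))"
    unfolding stepMW Let_def fM_d using assms by auto
  then show ?thesis unfolding dAW accW fN_d getS_def by simp
qed

definition TW :: "nat \<Rightarrow> nat \<Rightarrow> (nat set option \<times> nat) set" where
  "TW m n = insert (None, 0) (Some ` GW m \<times> {..<n})"

lemma dist_SS: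
  assumes "m \<ge> 2" "S \<in> GW m" "S' \<in> GW m" "(S, p) \<noteq> (S', p')" "p < n"
  shows "\<exists>z. set z \<subseteq> {..<8*(m+n)} \<and> accA (MW m) (NW n) (foldl (dA (MW m) (NW n)) (Some S, p) z)
          \<noteq> accA (MW m) (NW n) (foldl (dA (MW m) (NW n)) (Some S', p') z)"
proof (cases "S = S'")
  case False
  then obtain q where q: "(q \<in> S) \<noteq> (q \<in> S')" by blast
  then have "q < m" using assms(2,3) unfolding GW_def by auto
  then show ?thesis using q acc_t[OF assms(1), of n "Some S" p q] acc_t[OF assms(1), of n "Some S'" p' q]
    by (intro exI[of _ "[lt q]"]) (auto simp: getS_def lt_def)
next
  case True
  then have pp: "p \<noteq> p'" using assms(4) by simp
  have "S \<noteq> {}" using assms(2) unfolding GW_def by auto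
  then show ?thesis using True pp acc_d[OF assms(1), of S n p p] acc_d[OF assms(1), of S n p' p] assms(5)
    by (intro exI[of _ "[ld p]"]) (auto simp: ld_def)
qed

lemma dist_all:
  assumes "m \<ge> 2" "t \<in> TW m n" "t' \<in> TW m n" "t \<noteq> t'"
  shows "\<exists>z. set z \<subseteq> {..<8*(m+n)} \<and> accA (MW m) (NW n) (foldl (dA (MW m) (NW n)) t z)
          \<noteq> accA (MW m) (NW n) (foldl (dA (MW m) (NW n)) t' z)"
proof -
  have NS: "\<exists>z. set z \<subseteq> {..<8*(m+n)} \<and> accA (MW m) (NW n) (foldl (dA (MW m) (NW n)) (None, 0) z)
          \<noteq> accA (MW m) (NW n) (foldl (dA (MW m) (NW n)) (Some S, p) z)" if "S \<in> GW m" "p < n" for S p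
  proof (cases "p = 0 \<and> m - 1 \<in> S")
    case False then show ?thesis by (intro exI[of _ "[]"]) (auto simp: accW)
  next
    case True
    have "m - 1 \<notin> getS (MW m) None" using assms(1) by (simp add: getS_def MW_simps)
    moreover have "m - 1 < m" using assms(1) by simp
    ultimately show ?thesis using True acc_t[OF assms(1), of n None 0 "m - 1"] acc_t[OF assms(1), of n "Some S" p "m - 1"]
      by (intro exI[of _ "[lt (m - 1)]"]) (auto simp: getS_def lt_def)
  qed
  show ?thesis
  proof (cases t)
    case (Pair x p)
    obtain x' p' where t': "t' = (x', p')" by (cases t')
    show ?thesis
    proof (cases x)
      case None
      then have "t = (None, 0)" using assms(2) Pair unfolding TW_def by auto
      then obtain S where "x' = Some S" "S \<in> GW m" "p' < n" using assms t' unfolding TW_def by auto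
      then show ?thesis using NS \<open>t = (None, 0)\<close> t' by auto
    next
      case (Some S)
      then have S: "S \<in> GW m" "p < n" using assms(2) Pair unfolding TW_def by auto
      show ?thesis
      proof (cases x')
        case None
        then have "t' = (None, 0)" using assms(3) t' unfolding TW_def by auto
        then show ?thesis using NS[OF S] Pair Some by metis
      next
        case (Some S')
        then have "S' \<in> GW m" using assms(3) t' unfolding TW_def by auto
        moreover have "(S, p) \<noteq> (S', p')" using assms(4) Pair t' Some \<open>x = Some S\<close> by auto
        ultimately show ?thesis using dist_SS[OF assms(1) S(1) _ _ S(2)] Pair t' Some \<open>x = Some S\<close> by auto
      qed
    qed
  qed
qed

lemma card_TW:
  assumes "m \<ge> 2"
  shows "card (TW m n) = 3 * 2 ^ (m - 2) * n - n + 1"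
proof -
  have "card (GW m) = 2 ^ m - 1 - 2 ^ (m - 2)"
    unfolding GW_def using cardG[of "{..<m}" 0 "m - 1"] assms by simp
  moreover have "finite (GW m)" unfolding GW_def by (rule finite_subset[of _ "Pow {..<m}"]) auto
  ultimately have "card (TW m n) = Suc ((2 ^ m - 1 - 2 ^ (m - 2)) * n)"
    unfolding TW_def by (simp add: card_cartesian_product card_image)
  then show ?thesis using arith1_eq[OF assms] by simp
qed

theorem theorem6:
  fixes m n :: nat
  assumes "m \<ge> 2" and "n \<ge> 2"
  shows "(\<forall>(Sig :: 'a set) (M :: ('s,'a) dfa) (N :: ('t,'a) dfa).
            complete_dfa Sig M \<and> card (states M) = m \<and>
            complete_dfa Sig N \<and> card (states N) = n \<longrightarrow>
            (\<exists>D :: (nat,'a) dfa. complete_dfa Sig D \<and>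
                card (states D) \<le> 3 * 2 ^ (m - 2) * n - n + 1 \<and>
                lang Sig D = kstar (lang Sig M) \<inter> lang Sig N))
       \<and> (\<exists>(Sig :: nat set) (M :: (nat,nat) dfa) (N :: (nat,nat) dfa).
            complete_dfa Sig M \<and> card (states M) = m \<and>
            complete_dfa Sig N \<and> card (states N) = n \<and>
            sc Sig (kstar (lang Sig M) \<inter> lang Sig N) = 3 * 2 ^ (m - 2) * n - n + 1)"
proof (intro conjI allI impI)
  fix Sig :: "'a set" and M :: "('s,'a) dfa" and N :: "('t,'a) dfa"
  assume "complete_dfa Sig M \<and> card (states M) = m \<and> complete_dfa Sig N \<and> card (states N) = n"
  then show "\<exists>D :: (nat,'a) dfa. complete_dfa Sig D \<and>
                card (states D) \<le> 3 * 2 ^ (m - 2) * n - n + 1 \<and>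
                lang Sig D = kstar (lang Sig M) \<inter> lang Sig N"
    using part1[OF assms(1)] by blast
next
  define Sig where "Sig = {..<8*(m+n)}"
  define B where "B = 3 * 2 ^ (m - 2) * n - n + 1"
  have cM: "complete_dfa Sig (MW m)" unfolding Sig_def using MW_complete[OF assms(1)] .
  have cN: "complete_dfa Sig (NW n)" unfolding Sig_def using NW_complete[OF assms(2)] .
  have mM: "card (states (MW m)) = m" and nN: "card (states (NW n)) = n" by (simp_all add: MW_simps NW_simps)
  let ?L = "kstar (lang Sig (MW m)) \<inter> lang Sig (NW n)"
  let ?P = "\<lambda>k. \<exists>D :: (nat,nat) dfa. complete_dfa Sig D \<and> card (states D) = k \<and> lang Sig D = ?L"
  have low: "B \<le> k" if Pk: "?P k" for k
  proof -
    obtain D :: "(nat,nat) dfa" where D: "complete_dfa Sig D" "card (states D) = k" "lang Sig D = ?L"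
      using Pk by blast
    have "card (TW m n) \<le> card (states D)"
    proof (rule lower[OF D(1) D(3)])
      show "\<forall>t\<in>TW m n. \<exists>w. set w \<subseteq> Sig \<and> foldl (dA (MW m) (NW n)) (sA (MW m) (NW n)) w = t"
      proof
        fix t assume "t \<in> TW m n"
        then consider "t = (None, 0)" | S p where "t = (Some S, p)" "S \<in> GW m" "p < n"
          unfolding TW_def by auto
        then show "\<exists>w. set w \<subseteq> Sig \<and> foldl (dA (MW m) (NW n)) (sA (MW m) (NW n)) w = t"
        proof cases
          case 1 then show ?thesis by (intro exI[of _ "[]"]) (simp add: sA_def NW_simps)
        next
          case 2 then show ?thesis using reach_all[OF assms(1), of S p n] unfolding Sig_def by auto
        qed
      qed
      show "\<forall>t\<in>TW m n. \<forall>t'\<in>TW m n. t \<noteq> t' \<longrightarrow>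
         (\<exists>z. set z \<subseteq> Sig \<and> accA (MW m) (NW n) (foldl (dA (MW m) (NW n)) t z)
             \<noteq> accA (MW m) (NW n) (foldl (dA (MW m) (NW n)) t' z))"
        using dist_all[OF assms(1)] unfolding Sig_def by blast
    qed
    then show ?thesis using card_TW[OF assms(1), of n] D(2) unfolding B_def by simp
  qed
  obtain D0 :: "(nat,nat) dfa" where D0: "complete_dfa Sig D0" "card (states D0) \<le> B" "lang Sig D0 = ?L"
    using part1[OF assms(1) cM mM cN nN] unfolding B_def by blast
  have "B \<le> card (states D0)" by (rule low) (use D0 in blast)
  then have "card (states D0) = B" using D0(2) by simp
  then have PB: "?P B" using D0 by blast
  have "sc Sig ?L = B" unfolding sc_def by (rule Least_equality[where P="?P", OF PB low])
  then show "\<exists>(Sig :: nat set) (M :: (nat,nat) dfa) (N :: (nat,nat) dfa).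
            complete_dfa Sig M \<and> card (states M) = m \<and>
            complete_dfa Sig N \<and> card (states N) = n \<and>
            sc Sig (kstar (lang Sig M) \<inter> lang Sig N) = 3 * 2 ^ (m - 2) * n - n + 1"
    using cM cN mM nN unfolding B_def by blast
qed



end
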